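(* Consider the uplink system described in the context, with $U$ users, user $u$ having $N_u$ transmit antennas, $L_u$ propagation paths, power budget $P_u>0$ and aperture $W_u>0$. Let $C^*$ denote the supremum of $$C(\mathbf Q_1,\dots,\mathbf Q_U,\mathbf w_1,\dots,\mathbf w_U)=\log\Big|\sum_{u=1}^U \mathbf G_u(\mathbf w_u)\mathbf Q_u\mathbf G_u^H(\mathbf w_u)+\mathbf I_M\Big|$$ over all $\mathbf Q_u\in\mathbb C^{N_u\times N_u}$ with $\mathbf Q_u\succeq \mathbf 0$, $\mathrm{tr}(\mathbf Q_u)\le P_u$, and all $\mathbf w_u=[w_{u,1},\dots,w_{u,N_u}]^T$ with $0\le w_{u,n}\le W_u$ and $w_{u,n}\neq w_{u,n'}$ for $n\ne n'$ ($u=1,\dots,U$). Then $C^*$ is upper bounded by the optimal value of the convex problem $$\max_{\tilde{\mathbf Q}_1,\dots,\tilde{\mathbf Q}_U}\ \log\Big|\sum_{u=1}^U M N_u \mathbf A_{u,\mathrm R}\boldsymbol\Gamma_u\tilde{\mathbf Q}_u\boldsymbol\Gamma_u^H\mathbf A_{u,\mathrm R}^H+\mathbf I_M\Big|\quad\text{s.t. } \tilde{\mathbf Q}_u\in\mathbb C^{L_u\times L_u},\ \tilde{\mathbf Q}_u\succeq\mathbf 0,\ \mathrm{tr}(\tilde{\mathbf Q}_u)\le L_uP_u,\ u=1,\dots,U.$$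
   Context: A base station (BS) has an $M$-antenna uniform linear array with spacing $d=\lambda/2$ ($\lambda$ the wavelength). User $u\in\{1,\dots,U\}$ has $N_u$ antennas placed at positions $w_{u,1},\dots,w_{u,N_u}\in[0,W_u]$ on a line. There are $L_u$ propagation paths between user $u$ and the BS, with complex gains $\gamma_{u,1},\dots,\gamma_{u,L_u}$, angles of arrival $\beta_{u,l}\in[0,\pi]$ and angles of departure $\theta_{u,l}\in[0,\pi]$. Define $\mathbf a_{u,\mathrm R}(\beta)=\frac1{\sqrt M}[1,e^{-j\frac{2\pi}{\lambda}d\cos\beta},\dots,e^{-j\frac{2\pi}{\lambda}(M-1)d\cos\beta}]^T$ and $\mathbf a_{u,\mathrm T}(\theta,\mathbf w_u)=\frac1{\sqrt{N_u}}[e^{-j\frac{2\pi}{\lambda}w_{u,1}\cos\theta},\dots,e^{-j\frac{2\pi}{\lambda}w_{u,N_u}\cos\theta}]^T$. Let $\boldsymbol\Gamma_u=\mathrm{diag}(\gamma_{u,1},\dots,\gamma_{u,L_u})$, $\mathbf A_{u,\mathrm R}=[\mathbf a_{u,\mathrm R}(\beta_{u,1}),\dots,\mathbf a_{u,\mathrm R}(\beta_{u,L_u})]\in\mathbb C^{M\times L_u}$, $\mathbf A_{u,\mathrm T}(\mathbf w_u)=[\mathbf a_{u,\mathrm T}(\theta_{u,1},\mathbf w_u),\dots,\mathbf a_{u,\mathrm T}(\theta_{u,L_u},\mathbf w_u)]\in\mathbb C^{N_u\times L_u}$, and the channel matrix $\mathbf G_u(\mathbf w_u)=\sqrt{MN_u}\,\mathbf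 A_{u,\mathrm R}\boldsymbol\Gamma_u\mathbf A_{u,\mathrm T}^H(\mathbf w_u)\in\mathbb C^{M\times N_u}$. $|\cdot|$ denotes determinant. *)

theory Defs
  imports "HOL-Analysis.Analysis" "Jordan_Normal_Form.Matrix" "Jordan_Normal_Form.Determinant"
begin

definition mat_ct :: "complex mat \<Rightarrow> complex mat" where
  "mat_ct A = mat (dim_col A) (dim_row A) (\<lambda>(i,j). cnj (A $$ (j,i)))"

definition psd_mat :: "nat \<Rightarrow> complex mat \<Rightarrow> bool" where
  "psd_mat n A \<longleftrightarrow> A \<in> carrier_mat n n \<and> mat_ct A = A \<and>
     (\<forall>x \<in> carrier_vec n. 0 \<le> Re (\<Sum>i<n. \<Sum>j<n. cnj (x $ i) * A $$ (i,j) * x $ j))"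

definition mtrace :: "complex mat \<Rightarrow> complex" where
  "mtrace A = (\<Sum>i<dim_row A. A $$ (i,i))"

fun msum :: "nat \<Rightarrow> (nat \<Rightarrow> complex mat) \<Rightarrow> nat \<Rightarrow> complex mat" where
  "msum n F 0 = 0\<^sub>m n n"
| "msum n F (Suc k) = msum n F k + F k"

definition A_R :: "real \<Rightarrow> real \<Rightarrow> nat \<Rightarrow> nat \<Rightarrow> (nat \<Rightarrow> real) \<Rightarrow> complex mat" where
  "A_R lam d M L beta = mat M L (\<lambda>(m,l).
      complex_of_real (1 / sqrt (real M)) *
      exp (- \<i> * complex_of_real (2 * pi / lam * real m * d * cos (beta l))))"

definition A_T :: "real \<Rightarrow> nat \<Rightarrow> nat \<Rightarrow> (nat \<Rightarrow> real) \<Rightarrow> (nat \<Rightarrow> real) \<Rightarrow> complex mat" where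
  "A_T lam N L theta w = mat N L (\<lambda>(n,l).
      complex_of_real (1 / sqrt (real N)) *
      exp (- \<i> * complex_of_real (2 * pi / lam * w n * cos (theta l))))"

definition Gam :: "nat \<Rightarrow> (nat \<Rightarrow> complex) \<Rightarrow> complex mat" where
  "Gam L g = mat L L (\<lambda>(i,j). if i = j then g i else 0)"

definition chan :: "real \<Rightarrow> real \<Rightarrow> nat \<Rightarrow> nat \<Rightarrow> nat \<Rightarrow> (nat \<Rightarrow> complex) \<Rightarrow>
    (nat \<Rightarrow> real) \<Rightarrow> (nat \<Rightarrow> real) \<Rightarrow> (nat \<Rightarrow> real) \<Rightarrow> complex mat" where
  "chan lam d M N L g beta theta w =
     complex_of_real (sqrt (real M * real N)) \<cdot>\<^sub>m
       (A_R lam d M L beta * Gam L g * mat_ct (A_T lam N L theta w))"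

definition logdet :: "complex mat \<Rightarrow> real" where
  "logdet X = ln (cmod (det X))"

end

theory Submission imports Defs begin


lemma ct_dim[simp]: "dim_row (mat_ct A) = dim_col A" "dim_col (mat_ct A) = dim_row A"
  by (auto simp: mat_ct_def)
lemma ct_idx[simp]: "i < dim_col A \<Longrightarrow> j < dim_row A \<Longrightarrow> mat_ct A $$ (i,j) = cnj (A $$ (j,i))"
  by (auto simp: mat_ct_def)
lemma ct_carrier: "A \<in> carrier_mat n m \<Longrightarrow> mat_ct A \<in> carrier_mat m n"
  unfolding carrier_mat_def by simp
lemma ct_ct[simp]: "mat_ct (mat_ct A) = A"
  unfolding mat_ct_def by (rule eq_matI) auto
lemma ct_mult: assumes "dim_col A = dim_row B" shows "mat_ct (A * B) = mat_ct B * mat_ct A"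
proof (rule eq_matI)
  fix i j assume i: "i < dim_row (mat_ct B * mat_ct A)" and j: "j < dim_col (mat_ct B * mat_ct A)"
  have i': "i < dim_col B" and j': "j < dim_row A" using i j by auto
  have e1: "(A * B) $$ (j,i) = (\<Sum>k<dim_row B. A $$ (j,k) * B $$ (k,i))"
    using i' j' assms by (auto simp: scalar_prod_def row_def col_def atLeast0LessThan intro!: sum.cong)
  have e2: "(mat_ct B * mat_ct A) $$ (i,j) = (\<Sum>k<dim_row B. cnj (B $$ (k,i)) * cnj (A $$ (j,k)))"
    using i' j' assms by (auto simp: scalar_prod_def row_def col_def atLeast0LessThan intro!: sum.cong)
  have "mat_ct (A * B) $$ (i,j) = cnj ((A * B) $$ (j,i))"
    using i' j' by (simp add: mat_ct_def)
  also have "\<dots> = (\<Sum>k<dim_row B. cnj (B $$ (k,i)) * cnj (A $$ (j,k)))"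
    unfolding e1 by (simp add: mult.commute)
  finally show "mat_ct (A * B) $$ (i,j) = (mat_ct B * mat_ct A) $$ (i,j)" unfolding e2 .
next
  show "dim_row (mat_ct (A * B)) = dim_row (mat_ct B * mat_ct A)" by simp
  show "dim_col (mat_ct (A * B)) = dim_col (mat_ct B * mat_ct A)" by simp
qed
lemma ct_smult: "mat_ct (c \<cdot>\<^sub>m A) = cnj c \<cdot>\<^sub>m mat_ct A"
proof (rule eq_matI)
  fix i j assume "i < dim_row (cnj c \<cdot>\<^sub>m mat_ct A)" "j < dim_col (cnj c \<cdot>\<^sub>m mat_ct A)"
  then have i: "i < dim_col A" and j: "j < dim_row A" by auto
  show "mat_ct (c \<cdot>\<^sub>m A) $$ (i,j) = (cnj c \<cdot>\<^sub>m mat_ct A) $$ (i,j)" using i j by simp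
next
  show "dim_row (mat_ct (c \<cdot>\<^sub>m A)) = dim_row (cnj c \<cdot>\<^sub>m mat_ct A)" by simp
  show "dim_col (mat_ct (c \<cdot>\<^sub>m A)) = dim_col (cnj c \<cdot>\<^sub>m mat_ct A)" by simp
qed

lemma real_quad:
  fixes a b C :: real
  assumes "\<And>s. 0 \<le> a * s^2 - 2 * s * C + b * C" "a \<ge> 0" "b \<ge> 0" "C \<ge> 0"
  shows "C \<le> a * b"
proof (cases "a = 0")
  case True
  have "0 \<le> a * (b+1)^2 - 2 * (b + 1) * C + b * C" using assms(1)[of "b+1"] .
  then have "0 \<le> - ((b + 2) * C)" using True by (simp add: algebra_simps)
  moreover have "0 \<le> (b + 2) * C" using assms by simp
  ultimately have "(b + 2) * C = 0" by linarith
  then have "C = 0" using assms by simp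
  then show ?thesis using assms by simp
next
  case False
  then have a: "a > 0" using assms by simp
  have "0 \<le> a * (C/a)^2 - 2 * (C/a) * C + b * C" using assms(1) .
  also have "a * (C/a)^2 - 2 * (C/a) * C + b * C = (C / a) * (a * b - C)"
    using a by (simp add: power2_eq_square field_simps)
  finally have h: "0 \<le> (C / a) * (a * b - C)" .
  show ?thesis
  proof (cases "C = 0")
    case True then show ?thesis using assms by simp
  next
    case False
    then have "C / a > 0" using a assms by simp
    show ?thesis
    proof (rule ccontr)
      assume "\<not> C \<le> a * b"
      then have "a * b - C < 0" by simp
      then have "(C / a) * (a * b - C) < 0" using \<open>C / a > 0\<close> mult_pos_neg by blast
      then show False using h by simp
    qed
  qed
qed

lemma amgm_bound:
  fixes p q z dk dm :: real
  assumes "p \<ge> 0" "q \<ge> 0" "z \<ge> 0" "dk \<ge> 0" "dm \<ge> 0" "z^2 \<le> dk * dm"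
  shows "p * z * q \<le> (p^2 * dm + q^2 * dk) / 2"
proof -
  have "(p * z * q)^2 = p^2 * q^2 * z^2" by (simp add: power_mult_distrib)
  also have "\<dots> \<le> p^2 * q^2 * (dk * dm)" using assms by (simp add: mult_left_mono)
  also have "\<dots> \<le> ((p^2 * dm + q^2 * dk) / 2)^2"
  proof -
    have "0 \<le> (p^2 * dm - q^2 * dk)^2" by simp
    then show ?thesis by (simp add: power2_eq_square algebra_simps)
  qed
  finally have "(p * z * q)^2 \<le> ((p^2 * dm + q^2 * dk) / 2)^2" .
  then show ?thesis
    by (rule power2_le_imp_le) (use assms in simp)
qed

lemma sum_two:
  assumes "i < N" "j < N" "i \<noteq> j" "\<And>k. k < N \<Longrightarrow> k \<noteq> i \<Longrightarrow> k \<noteq> j \<Longrightarrow> f k = 0"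
  shows "(\<Sum>k<(N::nat). f k) = f i + f j"
proof -
  have "(\<Sum>k<N. f k) = (\<Sum>k\<in>{i,j}. f k)"
    using assms by (intro sum.mono_neutral_right) (auto simp: finite_lessThan)
  then show ?thesis using assms by simp
qed

lemma sum_one:
  assumes "i < N" "\<And>k. k < N \<Longrightarrow> k \<noteq> i \<Longrightarrow> f k = 0"
  shows "(\<Sum>k<(N::nat). f k) = f i"
proof -
  have "(\<Sum>k<N. f k) = (\<Sum>k\<in>{i}. f k)"
    using assms by (intro sum.mono_neutral_right) (auto simp: finite_lessThan)
  then show ?thesis using assms by simp
qed

lemma psd_herm:
  assumes "psd_mat N Q" "i < N" "j < N"
  shows "Q $$ (j,i) = cnj (Q $$ (i,j))"
proof -
  have "mat_ct Q = Q" "Q \<in> carrier_mat N N" using assms unfolding psd_mat_def by auto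
  then have "Q $$ (j,i) = mat_ct Q $$ (j,i)" by simp
  also have "\<dots> = cnj (Q $$ (i,j))" using assms \<open>Q \<in> carrier_mat N N\<close> by (simp add: mat_ct_def)
  finally show ?thesis .
qed

lemma psd_diag_real:
  assumes "psd_mat N Q" "i < N"
  shows "Q $$ (i,i) = complex_of_real (Re (Q $$ (i,i)))"
proof -
  have "Q $$ (i,i) = cnj (Q $$ (i,i))" using psd_herm[OF assms assms(2)] .
  then have "Im (Q $$ (i,i)) = 0" by (metis cnj.simps(2) complex_cnj_cancel_iff add.inverse_neutral
     neg_equal_zero)
  then show ?thesis by (simp add: complex_eq_iff)
qed

lemma psd_form:
  assumes "psd_mat N Q" "x \<in> carrier_vec N"
  shows "0 \<le> Re (\<Sum>k<N. \<Sum>m<N. cnj (x $ k) * Q $$ (k,m) * x $ m)"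
  using assms unfolding psd_mat_def by blast

lemma psd_diag_nonneg:
  assumes "psd_mat N Q" "i < N"
  shows "0 \<le> Re (Q $$ (i,i))"
proof -
  define x where "x = vec N (\<lambda>k. if k = i then (1::complex) else 0)"
  have "0 \<le> Re (\<Sum>k<N. \<Sum>m<N. cnj (x $ k) * Q $$ (k,m) * x $ m)"
    using psd_form[OF assms(1), of x] unfolding x_def by simp
  also have "(\<Sum>k<N. \<Sum>m<N. cnj (x $ k) * Q $$ (k,m) * x $ m) = Q $$ (i,i)"
    unfolding x_def using assms(2)
    by (subst sum_one[of i]; simp)+
  finally show ?thesis .
qed


lemma psd_entry:
  assumes P: "psd_mat N Q" and i: "i < N" and j: "j < N"
  shows "(cmod (Q $$ (i,j)))^2 \<le> Re (Q $$ (i,i)) * Re (Q $$ (j,j))"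
proof (cases "i = j")
  case True
  have "Q $$ (i,i) = complex_of_real (Re (Q $$ (i,i)))" by (rule psd_diag_real[OF P i])
  then have "cmod (Q $$ (i,i)) = \<bar>Re (Q $$ (i,i))\<bar>" by (metis norm_of_real)
  then show ?thesis using True by (simp add: power2_eq_square)
next
  case False
  define a where "a = Re (Q $$ (i,i))"
  define b where "b = Re (Q $$ (j,j))"
  define c where "c = Q $$ (i,j)"
  have Qii: "Q $$ (i,i) = complex_of_real a" unfolding a_def by (rule psd_diag_real[OF P i])
  have Qjj: "Q $$ (j,j) = complex_of_real b" unfolding b_def by (rule psd_diag_real[OF P j])
  have Qji: "Q $$ (j,i) = cnj c" unfolding c_def by (rule psd_herm[OF P i j])
  have "0 \<le> a * s^2 - 2 * s * (cmod c)^2 + b * (cmod c)^2" for s :: real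
  proof -
    define x where "x = vec N (\<lambda>k. if k = i then complex_of_real s else if k = j then - cnj c else 0)"
    have x: "x \<in> carrier_vec N" unfolding x_def by simp
    have xi: "x $ i = complex_of_real s" unfolding x_def using i by simp
    have xj: "x $ j = - cnj c" unfolding x_def using j False by simp
    have xk: "k < N \<Longrightarrow> k \<noteq> i \<Longrightarrow> k \<noteq> j \<Longrightarrow> x $ k = 0" for k unfolding x_def by simp
    have inner: "(\<Sum>m<N. cnj (x $ k) * Q $$ (k,m) * x $ m) =
        cnj (x $ k) * Q $$ (k,i) * x $ i + cnj (x $ k) * Q $$ (k,j) * x $ j" for k
      by (rule sum_two[OF i j False]) (simp add: xk)
    have "(\<Sum>k<N. \<Sum>m<N. cnj (x $ k) * Q $$ (k,m) * x $ m) =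
        (cnj (x $ i) * Q $$ (i,i) * x $ i + cnj (x $ i) * Q $$ (i,j) * x $ j) +
        (cnj (x $ j) * Q $$ (j,i) * x $ i + cnj (x $ j) * Q $$ (j,j) * x $ j)"
      unfolding inner by (rule sum_two[OF i j False]) (simp add: xk)
    also have "\<dots> = complex_of_real (a * s^2) - 2 * complex_of_real s * (c * cnj c) + complex_of_real b * (c * cnj c)"
      unfolding xi xj Qii Qjj Qji c_def[symmetric] by (simp add: power2_eq_square algebra_simps)
    also have "\<dots> = complex_of_real (a * s^2 - 2 * s * (cmod c)^2 + b * (cmod c)^2)"
      unfolding complex_norm_square[symmetric] by simp
    finally show ?thesis using psd_form[OF P x] by simp
  qed
  moreover have "a \<ge> 0" unfolding a_def by (rule psd_diag_nonneg[OF P i])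
  moreover have "b \<ge> 0" unfolding b_def by (rule psd_diag_nonneg[OF P j])
  ultimately have "(cmod c)^2 \<le> a * b" by (intro real_quad) auto
  then show ?thesis unfolding a_def b_def c_def .
qed


lemma double_sum_sym:
  fixes p d :: "nat \<Rightarrow> real"
  shows "(\<Sum>k<N. \<Sum>m<N. ((p k)^2 * d m + (p m)^2 * d k) / 2) = (\<Sum>k<N. (p k)^2) * (\<Sum>k<N. d k)"
proof -
  have "(\<Sum>k<N. \<Sum>m<N. ((p k)^2 * d m + (p m)^2 * d k) / 2) =
     ((\<Sum>k<N. \<Sum>m<N. (p k)^2 * d m) + (\<Sum>k<N. \<Sum>m<N. (p m)^2 * d k)) / 2"
    by (simp add: sum.distrib sum_divide_distrib add_divide_distrib)
  also have "(\<Sum>k<N. \<Sum>m<N. (p m)^2 * d k) = (\<Sum>k<N. \<Sum>m<N. (p k)^2 * d m)"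
    by (rule sum.swap)
  also have "(\<Sum>k<N. \<Sum>m<N. (p k)^2 * d m) = (\<Sum>k<N. (p k)^2) * (\<Sum>k<N. d k)"
    by (simp add: sum_product)
  finally show ?thesis by simp
qed

lemma qf_bound:
  assumes P: "psd_mat N Q"
  shows "Re (\<Sum>k<N. \<Sum>m<N. cnj (a k) * Q $$ (k,m) * a m) \<le> Re (mtrace Q) * (\<Sum>k<N. (cmod (a k))^2)"
proof -
  have dimQ: "dim_row Q = N" using P unfolding psd_mat_def by auto
  have "Re (\<Sum>k<N. \<Sum>m<N. cnj (a k) * Q $$ (k,m) * a m) = (\<Sum>k<N. \<Sum>m<N. Re (cnj (a k) * Q $$ (k,m) * a m))"
    by simp
  also have "\<dots> \<le> (\<Sum>k<N. \<Sum>m<N. ((cmod (a k))^2 * Re (Q $$ (m,m)) + (cmod (a m))^2 * Re (Q $$ (k,k))) / 2)"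
  proof (intro sum_mono)
    fix k m assume k: "k \<in> {..<N}" and m: "m \<in> {..<N}"
    have "Re (cnj (a k) * Q $$ (k,m) * a m) \<le> cmod (cnj (a k) * Q $$ (k,m) * a m)"
      by (rule complex_Re_le_cmod)
    also have "\<dots> = cmod (a k) * cmod (Q $$ (k,m)) * cmod (a m)" by (simp add: norm_mult)
    also have "\<dots> \<le> ((cmod (a k))^2 * Re (Q $$ (m,m)) + (cmod (a m))^2 * Re (Q $$ (k,k))) / 2"
      using k m psd_entry[OF P, of k m] psd_diag_nonneg[OF P, of k] psd_diag_nonneg[OF P, of m]
      by (intro amgm_bound) auto
    finally show "Re (cnj (a k) * Q $$ (k,m) * a m) \<le> ((cmod (a k))^2 * Re (Q $$ (m,m)) + (cmod (a m))^2 * Re (Q $$ (k,k))) / 2" .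
  qed
  also have "\<dots> = (\<Sum>k<N. (cmod (a k))^2) * (\<Sum>k<N. Re (Q $$ (k,k)))"
    by (rule double_sum_sym)
  also have "(\<Sum>k<N. Re (Q $$ (k,k))) = Re (mtrace Q)"
    unfolding mtrace_def dimQ by simp
  finally show ?thesis by (simp add: mult.commute)
qed


lemma sum4:
  fixes x :: "nat \<Rightarrow> complex"
  shows "(\<Sum>i<L. \<Sum>j<L. cnj (x i) * (\<Sum>k<N. \<Sum>m<N. cnj (t k i) * q k m * t m j) * x j) =
   (\<Sum>k<N. \<Sum>m<N. cnj (\<Sum>i<L. t k i * x i) * q k m * (\<Sum>j<L. t m j * x j))"
proof -
  have "(\<Sum>k<N. \<Sum>m<N. cnj (\<Sum>i<L. t k i * x i) * q k m * (\<Sum>j<L. t m j * x j))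
     = (\<Sum>k<N. \<Sum>m<N. \<Sum>i<L. \<Sum>j<L. cnj (x i) * (cnj (t k i) * q k m * t m j) * x j)"
    by (simp add: sum_distrib_left sum_distrib_right mult_ac)
  also have "\<dots> = (\<Sum>k<N. \<Sum>i<L. \<Sum>m<N. \<Sum>j<L. cnj (x i) * (cnj (t k i) * q k m * t m j) * x j)"
    by (rule sum.cong[OF refl], rule sum.swap)
  also have "\<dots> = (\<Sum>i<L. \<Sum>k<N. \<Sum>m<N. \<Sum>j<L. cnj (x i) * (cnj (t k i) * q k m * t m j) * x j)"
    by (rule sum.swap)
  also have "\<dots> = (\<Sum>i<L. \<Sum>k<N. \<Sum>j<L. \<Sum>m<N. cnj (x i) * (cnj (t k i) * q k m * t m j) * x j)"
    by (intro sum.cong[OF refl] sum.swap)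
  also have "\<dots> = (\<Sum>i<L. \<Sum>j<L. \<Sum>k<N. \<Sum>m<N. cnj (x i) * (cnj (t k i) * q k m * t m j) * x j)"
    by (intro sum.cong[OF refl] sum.swap)
  also have "\<dots> = (\<Sum>i<L. \<Sum>j<L. cnj (x i) * (\<Sum>k<N. \<Sum>m<N. cnj (t k i) * q k m * t m j) * x j)"
    by (simp add: sum_distrib_left sum_distrib_right)
  finally show ?thesis by simp
qed
lemma chan_eq:
  assumes R: "R \<in> carrier_mat M L" and G: "G \<in> carrier_mat L L" and T: "T \<in> carrier_mat N L"
    and Q: "Q \<in> carrier_mat N N"
  shows "(s \<cdot>\<^sub>m (R * G * mat_ct T)) * Q * mat_ct (s \<cdot>\<^sub>m (R * G * mat_ct T))
    = (s * cnj s) \<cdot>\<^sub>m (R * G * (mat_ct T * Q * T) * mat_ct G * mat_ct R)"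
proof -
  have ctT: "mat_ct T \<in> carrier_mat L N" using T by (rule ct_carrier)
  have ctG: "mat_ct G \<in> carrier_mat L L" using G by (rule ct_carrier)
  have ctR: "mat_ct R \<in> carrier_mat L M" using R by (rule ct_carrier)
  have e: "mat_ct (s \<cdot>\<^sub>m (R * G * mat_ct T)) = cnj s \<cdot>\<^sub>m (T * mat_ct G * mat_ct R)"
  proof -
    have RG: "R * G \<in> carrier_mat M L" using R G by (rule mult_carrier_mat)
    have "mat_ct (R * G * mat_ct T) = mat_ct (mat_ct T) * mat_ct (R * G)"
      by (rule ct_mult) (use G T in auto)
    also have "mat_ct (R * G) = mat_ct G * mat_ct R"
      by (rule ct_mult) (use R G in auto)
    also have "mat_ct (mat_ct T) * (mat_ct G * mat_ct R) = T * mat_ct G * mat_ct R"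
      unfolding ct_ct by (rule assoc_mult_mat[symmetric, OF T ctG ctR])
    finally show ?thesis by (simp only: ct_smult)
  qed
  define X where "X = R * G * mat_ct T"
  define Y where "Y = T * mat_ct G * mat_ct R"
  have RG: "R * G \<in> carrier_mat M L" by (rule mult_carrier_mat[OF R G])
  have X: "X \<in> carrier_mat M N" unfolding X_def by (rule mult_carrier_mat[OF RG ctT])
  have TG: "T * mat_ct G \<in> carrier_mat N L" by (rule mult_carrier_mat[OF T ctG])
  have Y: "Y \<in> carrier_mat N M" unfolding Y_def by (rule mult_carrier_mat[OF TG ctR])
  have XQ: "X * Q \<in> carrier_mat M N" by (rule mult_carrier_mat[OF X Q])
  have "(s \<cdot>\<^sub>m X) * Q * (cnj s \<cdot>\<^sub>m Y) = (s * cnj s) \<cdot>\<^sub>m (X * Q * Y)"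
  proof -
    have sXQ: "s \<cdot>\<^sub>m (X * Q) \<in> carrier_mat M N" by (rule smult_carrier_mat[OF XQ])
    have "(s \<cdot>\<^sub>m X) * Q = s \<cdot>\<^sub>m (X * Q)" by (rule mult_smult_assoc_mat[OF X Q])
    moreover have "(s \<cdot>\<^sub>m (X * Q)) * (cnj s \<cdot>\<^sub>m Y) = cnj s \<cdot>\<^sub>m ((s \<cdot>\<^sub>m (X * Q)) * Y)"
      by (rule mult_smult_distrib[OF sXQ Y])
    moreover have "(s \<cdot>\<^sub>m (X * Q)) * Y = s \<cdot>\<^sub>m (X * Q * Y)"
      by (rule mult_smult_assoc_mat[OF XQ Y])
    moreover have "cnj s \<cdot>\<^sub>m (s \<cdot>\<^sub>m Z) = (s * cnj s) \<cdot>\<^sub>m Z" for Z :: "complex mat"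
      by (rule eq_matI) (simp_all add: mult.commute mult.left_commute)
    ultimately show ?thesis by simp
  qed
  moreover have "X * Q * Y = R * G * (mat_ct T * Q * T) * mat_ct G * mat_ct R"
  proof -
    define A1 where "A1 = R * G"
    define W where "W = mat_ct G * mat_ct R"
    have A1: "A1 \<in> carrier_mat M L" unfolding A1_def by (rule RG)
    have W: "W \<in> carrier_mat L M" unfolding W_def by (rule mult_carrier_mat[OF ctG ctR])
    have QT: "Q * T \<in> carrier_mat N L" by (rule mult_carrier_mat[OF Q T])
    have TQ: "mat_ct T * Q \<in> carrier_mat L N" by (rule mult_carrier_mat[OF ctT Q])
    have K: "mat_ct T * Q * T \<in> carrier_mat L L" by (rule mult_carrier_mat[OF TQ T])
    have TW: "T * W \<in> carrier_mat N M" by (rule mult_carrier_mat[OF T W])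
    have QTW: "Q * (T * W) \<in> carrier_mat N M" by (rule mult_carrier_mat[OF Q TW])
    have A1T: "A1 * mat_ct T \<in> carrier_mat M N" by (rule mult_carrier_mat[OF A1 ctT])
    have A1K: "A1 * (mat_ct T * Q * T) \<in> carrier_mat M L" by (rule mult_carrier_mat[OF A1 K])
    have Y': "Y = T * W" unfolding Y_def W_def by (rule assoc_mult_mat[OF T ctG ctR])
    have X': "X = A1 * mat_ct T" unfolding X_def A1_def ..
    have "X * Q * Y = (A1 * mat_ct T) * (Q * (T * W))"
      unfolding X' Y' by (rule assoc_mult_mat[OF A1T Q TW])
    also have "\<dots> = A1 * (mat_ct T * (Q * (T * W)))"
      by (rule assoc_mult_mat[OF A1 ctT QTW])
    also have "Q * (T * W) = (Q * T) * W" by (rule assoc_mult_mat[OF Q T W, symmetric])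
    also have "mat_ct T * ((Q * T) * W) = (mat_ct T * (Q * T)) * W"
      by (rule assoc_mult_mat[OF ctT QT W, symmetric])
    also have "mat_ct T * (Q * T) = mat_ct T * Q * T"
      by (rule assoc_mult_mat[OF ctT Q T, symmetric])
    also have "A1 * ((mat_ct T * Q * T) * W) = (A1 * (mat_ct T * Q * T)) * W"
      by (rule assoc_mult_mat[OF A1 K W, symmetric])
    also have "\<dots> = A1 * (mat_ct T * Q * T) * mat_ct G * mat_ct R"
      unfolding W_def by (rule assoc_mult_mat[OF A1K ctG ctR, symmetric])
    finally show ?thesis unfolding A1_def .
  qed
  ultimately show ?thesis unfolding e X_def Y_def by simp
qed

lemma triple_entry:
  assumes T: "T \<in> carrier_mat N L" and Q: "Q \<in> carrier_mat N N" and i: "i < L" and j: "j < L"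
  shows "(mat_ct T * Q * T) $$ (i,j) = (\<Sum>k<N. \<Sum>m<N. cnj (T $$ (k,i)) * Q $$ (k,m) * T $$ (m,j))"
proof -
  have "(mat_ct T * Q * T) $$ (i,j) = (\<Sum>m<N. (\<Sum>k<N. cnj (T $$ (k,i)) * Q $$ (k,m)) * T $$ (m,j))"
    using T Q i j by (simp add: scalar_prod_def row_def col_def atLeast0LessThan)
  also have "\<dots> = (\<Sum>m<N. \<Sum>k<N. cnj (T $$ (k,i)) * Q $$ (k,m) * T $$ (m,j))"
    by (simp add: sum_distrib_right)
  also have "\<dots> = (\<Sum>k<N. \<Sum>m<N. cnj (T $$ (k,i)) * Q $$ (k,m) * T $$ (m,j))"
    by (rule sum.swap)
  finally show ?thesis .
qed

lemma Qt_psd: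
  assumes T: "T \<in> carrier_mat N L" and P: "psd_mat N Q"
  shows "psd_mat L (mat_ct T * Q * T)"
proof -
  have Q: "Q \<in> carrier_mat N N" and hQ: "mat_ct Q = Q" using P unfolding psd_mat_def by auto
  have ctT: "mat_ct T \<in> carrier_mat L N" using T by (rule ct_carrier)
  have car: "mat_ct T * Q * T \<in> carrier_mat L L" using T Q ctT by auto
  have herm: "mat_ct (mat_ct T * Q * T) = mat_ct T * Q * T"
  proof -
    have "mat_ct (mat_ct T * Q * T) = mat_ct T * mat_ct (mat_ct T * Q)"
      using T Q ctT by (subst ct_mult) auto
    also have "mat_ct (mat_ct T * Q) = Q * T"
      using T Q ctT hQ by (subst ct_mult) auto
    also have "mat_ct T * (Q * T) = mat_ct T * Q * T"
      using ctT Q T by (intro assoc_mult_mat[symmetric]) auto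
    finally show ?thesis .
  qed
  have form: "0 \<le> Re (\<Sum>i<L. \<Sum>j<L. cnj (x $ i) * (mat_ct T * Q * T) $$ (i,j) * x $ j)"
    if x: "x \<in> carrier_vec L" for x
  proof -
    define y where "y = vec N (\<lambda>k. \<Sum>i<L. T $$ (k,i) * x $ i)"
    have "(\<Sum>i<L. \<Sum>j<L. cnj (x $ i) * (mat_ct T * Q * T) $$ (i,j) * x $ j) =
       (\<Sum>i<L. \<Sum>j<L. cnj (x $ i) * (\<Sum>k<N. \<Sum>m<N. cnj (T $$ (k,i)) * Q $$ (k,m) * T $$ (m,j)) * x $ j)"
      using triple_entry[OF T Q] by simp
    also have "\<dots> = (\<Sum>k<N. \<Sum>m<N. cnj (\<Sum>i<L. T $$ (k,i) * x $ i) * Q $$ (k,m) * (\<Sum>j<L. T $$ (m,j) * x $ j))"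
      by (rule sum4)
    also have "\<dots> = (\<Sum>k<N. \<Sum>m<N. cnj (y $ k) * Q $$ (k,m) * y $ m)"
      unfolding y_def by simp
    finally show ?thesis using psd_form[OF P, of y] unfolding y_def by simp
  qed
  show ?thesis unfolding psd_mat_def using car herm form by blast
qed

lemma Qt_trace:
  assumes T: "T \<in> carrier_mat N L" and P: "psd_mat N Q"
    and cols: "\<And>l. l < L \<Longrightarrow> (\<Sum>k<N. (cmod (T $$ (k,l)))^2) \<le> 1"
  shows "Re (mtrace (mat_ct T * Q * T)) \<le> real L * Re (mtrace Q)"
proof -
  have Q: "Q \<in> carrier_mat N N" using P unfolding psd_mat_def by auto
  have trQ: "0 \<le> Re (mtrace Q)"
    proof -
    have "0 \<le> (\<Sum>i<N. Re (Q $$ (i,i)))" using psd_diag_nonneg[OF P] by (intro sum_nonneg) auto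
    then show ?thesis unfolding mtrace_def using Q by simp
  qed
  have "Re (mtrace (mat_ct T * Q * T)) = (\<Sum>l<L. Re (\<Sum>k<N. \<Sum>m<N. cnj (T $$ (k,l)) * Q $$ (k,m) * T $$ (m,l)))"
  proof -
    have d: "dim_row (mat_ct T * Q * T) = L" using T by simp
    show ?thesis unfolding mtrace_def d Re_sum using triple_entry[OF T Q] by (intro sum.cong) auto
  qed
  also have "\<dots> \<le> (\<Sum>l<L. Re (mtrace Q) * (\<Sum>k<N. (cmod (T $$ (k,l)))^2))"
    by (intro sum_mono qf_bound[OF P])
  also have "\<dots> \<le> (\<Sum>l<L. Re (mtrace Q))"
    using cols trQ by (intro sum_mono mult_left_le) auto
  also have "\<dots> = real L * Re (mtrace Q)" by simp
  finally show ?thesis .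
qed


lemma msum_cong: "(\<And>u. u < K \<Longrightarrow> F u = G u) \<Longrightarrow> msum n F K = msum n G K"
  by (induction K) auto

lemma AT_carrier: "A_T lam N L th w \<in> carrier_mat N L"
  unfolding A_T_def by (rule mat_carrier)
lemma AR_carrier: "A_R lam d M L be \<in> carrier_mat M L"
  unfolding A_R_def by (rule mat_carrier)
lemma Gam_carrier: "Gam L g \<in> carrier_mat L L"
  unfolding Gam_def by (rule mat_carrier)

lemma AT_col:
  assumes l: "l < L"
  shows "(\<Sum>k<N. (cmod (A_T lam N L th w $$ (k,l)))^2) \<le> 1"
proof -
  have "(cmod (A_T lam N L th w $$ (k,l)))^2 = 1 / real N" if k: "k < N" for k
  proof -
    have "A_T lam N L th w $$ (k,l) = complex_of_real (1 / sqrt (real N)) *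
      exp (- \<i> * complex_of_real (2 * pi / lam * w k * cos (th l)))"
      unfolding A_T_def using k l by simp
    also have "cmod \<dots> = 1 / sqrt (real N)"
    proof -
      define z where "z = - \<i> * complex_of_real (2 * pi / lam * w k * cos (th l))"
      have "cmod (exp z) = exp (Re z)" by (rule norm_exp_eq_Re)
      also have "Re z = 0" unfolding z_def by simp
      finally have "cmod (exp z) = 1" by simp
      moreover have "cmod (complex_of_real (1 / sqrt (real N))) = 1 / sqrt (real N)"
        by (simp only: norm_of_real) simp
      ultimately show ?thesis unfolding z_def[symmetric] norm_mult by simp
    qed
    finally show ?thesis by (simp add: power_divide)
  qed
  then have "(\<Sum>k<N. (cmod (A_T lam N L th w $$ (k,l)))^2) = real N * (1 / real N)"
    by simp
  also have "\<dots> \<le> 1" by (cases "N = 0") auto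
  finally show ?thesis .
qed

theorem theorem1:
  fixes lam :: real and M U :: nat
    and N L :: "nat \<Rightarrow> nat"
    and P W :: "nat \<Rightarrow> real"
    and gam :: "nat \<Rightarrow> nat \<Rightarrow> complex"
    and beta theta :: "nat \<Rightarrow> nat \<Rightarrow> real"
  assumes lam_pos: "lam > 0"
    and P_pos: "\<forall>u<U. P u > 0"
    and W_pos: "\<forall>u<U. W u > 0"
    and beta_rng: "\<forall>u<U. \<forall>l<L u. 0 \<le> beta u l \<and> beta u l \<le> pi"
    and theta_rng: "\<forall>u<U. \<forall>l<L u. 0 \<le> theta u l \<and> theta u l \<le> pi"
  shows
   "(SUP (Q, w) \<in> {(Q :: nat \<Rightarrow> complex mat, w :: nat \<Rightarrow> nat \<Rightarrow> real).
          (\<forall>u<U. psd_mat (N u) (Q u) \<and> Re (mtrace (Q u)) \<le> P u) \<and>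
          (\<forall>u<U. (\<forall>n<N u. 0 \<le> w u n \<and> w u n \<le> W u) \<and>
                 (\<forall>n<N u. \<forall>n'<N u. n \<noteq> n' \<longrightarrow> w u n \<noteq> w u n'))}.
       ereal (logdet (msum M (\<lambda>u.
           chan lam (lam / 2) M (N u) (L u) (gam u) (beta u) (theta u) (w u) * Q u *
           mat_ct (chan lam (lam / 2) M (N u) (L u) (gam u) (beta u) (theta u) (w u))) U
         + 1\<^sub>m M)))
    \<le>
    (SUP Qt \<in> {Qt :: nat \<Rightarrow> complex mat.
          \<forall>u<U. psd_mat (L u) (Qt u) \<and> Re (mtrace (Qt u)) \<le> real (L u) * P u}.
       ereal (logdet (msum M (\<lambda>u.
           complex_of_real (real M * real (N u)) \<cdot>\<^sub>m
             (A_R lam (lam / 2) M (L u) (beta u) * Gam (L u) (gam u) * Qt u *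
              mat_ct (Gam (L u) (gam u)) * mat_ct (A_R lam (lam / 2) M (L u) (beta u)))) U
         + 1\<^sub>m M)))"
  
proof (rule SUP_mono)
  fix p
  assume p: "p \<in> {(Q :: nat \<Rightarrow> complex mat, w :: nat \<Rightarrow> nat \<Rightarrow> real).
          (\<forall>u<U. psd_mat (N u) (Q u) \<and> Re (mtrace (Q u)) \<le> P u) \<and>
          (\<forall>u<U. (\<forall>n<N u. 0 \<le> w u n \<and> w u n \<le> W u) \<and>
                 (\<forall>n<N u. \<forall>n'<N u. n \<noteq> n' \<longrightarrow> w u n \<noteq> w u n'))}"
  obtain Q w where pQw: "p = (Q, w)" by (cases p)
  have hQ: "\<And>u. u < U \<Longrightarrow> psd_mat (N u) (Q u) \<and> Re (mtrace (Q u)) \<le> P u"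
    using p unfolding pQw by auto
  define T where "T u = A_T lam (N u) (L u) (theta u) (w u)" for u
  define Qt where "Qt u = mat_ct (T u) * Q u * T u" for u
  have Tc: "T u \<in> carrier_mat (N u) (L u)" for u unfolding T_def by (rule AT_carrier)
  have memb: "Qt \<in> {Qt :: nat \<Rightarrow> complex mat.
          \<forall>u<U. psd_mat (L u) (Qt u) \<and> Re (mtrace (Qt u)) \<le> real (L u) * P u}"
  proof (intro CollectI allI impI conjI)
    fix u assume u: "u < U"
    have ps: "psd_mat (N u) (Q u)" and tr: "Re (mtrace (Q u)) \<le> P u" using hQ[OF u] by auto
    show "psd_mat (L u) (Qt u)" unfolding Qt_def by (rule Qt_psd[OF Tc ps])
    have "Re (mtrace (Qt u)) \<le> real (L u) * Re (mtrace (Q u))"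
      unfolding Qt_def by (rule Qt_trace[OF Tc ps]) (unfold T_def, rule AT_col)
    also have "\<dots> \<le> real (L u) * P u" using tr by (intro mult_left_mono) auto
    finally show "Re (mtrace (Qt u)) \<le> real (L u) * P u" .
  qed
  have eq: "msum M (\<lambda>u.
           chan lam (lam / 2) M (N u) (L u) (gam u) (beta u) (theta u) (w u) * Q u *
           mat_ct (chan lam (lam / 2) M (N u) (L u) (gam u) (beta u) (theta u) (w u))) U
       = msum M (\<lambda>u.
           complex_of_real (real M * real (N u)) \<cdot>\<^sub>m
             (A_R lam (lam / 2) M (L u) (beta u) * Gam (L u) (gam u) * Qt u *
              mat_ct (Gam (L u) (gam u)) * mat_ct (A_R lam (lam / 2) M (L u) (beta u)))) U"
  proof (rule msum_cong)
    fix u assume u: "u < U"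
    have Qc: "Q u \<in> carrier_mat (N u) (N u)" using hQ[OF u] unfolding psd_mat_def by auto
    define s where "s = complex_of_real (sqrt (real M * real (N u)))"
    have ss: "s * cnj s = complex_of_real (real M * real (N u))"
      unfolding s_def by (simp flip: of_real_mult)
    have ch: "chan lam (lam / 2) M (N u) (L u) (gam u) (beta u) (theta u) (w u) =
      s \<cdot>\<^sub>m (A_R lam (lam / 2) M (L u) (beta u) * Gam (L u) (gam u) * mat_ct (T u))"
      unfolding chan_def s_def T_def ..
    show "chan lam (lam / 2) M (N u) (L u) (gam u) (beta u) (theta u) (w u) * Q u *
           mat_ct (chan lam (lam / 2) M (N u) (L u) (gam u) (beta u) (theta u) (w u)) =
          complex_of_real (real M * real (N u)) \<cdot>\<^sub>m
             (A_R lam (lam / 2) M (L u) (beta u) * Gam (L u) (gam u) * Qt u *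
              mat_ct (Gam (L u) (gam u)) * mat_ct (A_R lam (lam / 2) M (L u) (beta u)))"
      unfolding ch Qt_def ss[symmetric]
      by (rule chan_eq[OF AR_carrier Gam_carrier Tc Qc])
  qed
  show "\<exists>m\<in>{Qt :: nat \<Rightarrow> complex mat.
          \<forall>u<U. psd_mat (L u) (Qt u) \<and> Re (mtrace (Qt u)) \<le> real (L u) * P u}.
       (case p of (Q, w) \<Rightarrow> ereal (logdet (msum M (\<lambda>u.
           chan lam (lam / 2) M (N u) (L u) (gam u) (beta u) (theta u) (w u) * Q u *
           mat_ct (chan lam (lam / 2) M (N u) (L u) (gam u) (beta u) (theta u) (w u))) U
         + 1\<^sub>m M)))
       \<le> ereal (logdet (msum M (\<lambda>u.
           complex_of_real (real M * real (N u)) \<cdot>\<^sub>m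
             (A_R lam (lam / 2) M (L u) (beta u) * Gam (L u) (gam u) * m u *
              mat_ct (Gam (L u) (gam u)) * mat_ct (A_R lam (lam / 2) M (L u) (beta u)))) U
         + 1\<^sub>m M))"
    apply (rule bexI[OF _ memb])
    unfolding pQw prod.case eq by (rule order_refl)
qed

end
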